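(* Let $X$ be a compact metric space with metric $d$. If a continuous map $f\colon X\to X$ satisfies $X=R(f)$ and has the contractive shadowing property, then $X$ is a finite set.
   Context: For $x\in X$, the $\omega$-limit set $\omega(x,f)$ is the set of $y\in X$ such that $f^{i_j}(x)\to y$ for some sequence $0\le i_1<i_2<\cdots$. $R(f)=\{x\in X: x\in\omega(x,f)\}$. For $\delta>0$, a sequence $(x_i)_{i\ge0}$ is a $\delta$-pseudo orbit of $f$ if $d(f(x_i),x_{i+1})\le\delta$ for all $i\ge0$; it is $\epsilon$-shadowed by $x$ if $d(f^i(x),x_i)\le\epsilon$ for all $i\ge0$. $f$ has the contractive shadowing property if there are $0<L<1$ and $\delta_0>0$ such that for every $0<\delta\le\delta_0$, every $\delta$-pseudo orbit of $f$ is $L\delta$-shadowed by some point of $X$. *)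

theory Defs
  imports "HOL-Analysis.Analysis"
begin

definition omega_limit :: "('a::metric_space \<Rightarrow> 'a) \<Rightarrow> 'a \<Rightarrow> 'a set" where
  "omega_limit f x = {y. \<exists>r::nat \<Rightarrow> nat. strict_mono r \<and> (\<lambda>j. (f ^^ r j) x) \<longlonglongrightarrow> y}"

definition recurrent_set :: "'a set \<Rightarrow> ('a::metric_space \<Rightarrow> 'a) \<Rightarrow> 'a set" where
  "recurrent_set X f = {x \<in> X. x \<in> omega_limit f x}"

definition pseudo_orbit :: "'a set \<Rightarrow> ('a::metric_space \<Rightarrow> 'a) \<Rightarrow> real \<Rightarrow> (nat \<Rightarrow> 'a) \<Rightarrow> bool" where
  "pseudo_orbit X f \<delta> xs \<longleftrightarrow> (\<forall>i. xs i \<in> X) \<and> (\<forall>i. dist (f (xs i)) (xs (Suc i)) \<le> \<delta>)"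

definition shadows :: "('a::metric_space \<Rightarrow> 'a) \<Rightarrow> real \<Rightarrow> 'a \<Rightarrow> (nat \<Rightarrow> 'a) \<Rightarrow> bool" where
  "shadows f \<epsilon> x xs \<longleftrightarrow> (\<forall>i. dist ((f ^^ i) x) (xs i) \<le> \<epsilon>)"

definition contractive_shadowing :: "'a set \<Rightarrow> ('a::metric_space \<Rightarrow> 'a) \<Rightarrow> bool" where
  "contractive_shadowing X f \<longleftrightarrow>
     (\<exists>L \<delta>0. 0 < L \<and> L < 1 \<and> 0 < \<delta>0 \<and>
        (\<forall>\<delta>. 0 < \<delta> \<and> \<delta> \<le> \<delta>0 \<longrightarrow>
           (\<forall>xs. pseudo_orbit X f \<delta> xs \<longrightarrow> (\<exists>x\<in>X. shadows f (L * \<delta>) x xs))))"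

end

theory Submission
  imports Defs
begin

context
  fixes X :: "'a::metric_space set" and f :: "'a \<Rightarrow> 'a" and L d0 :: real
  assumes fX: "f ` X \<subseteq> X" and L0: "0 < L" and L1: "L < 1" and d0: "0 < d0"
    and shad: "\<And>\<delta> xs. 0 < \<delta> \<Longrightarrow> \<delta> \<le> d0 \<Longrightarrow> pseudo_orbit X f \<delta> xs \<Longrightarrow> \<exists>x\<in>X. shadows f (L*\<delta>) x xs"
begin

lemma funpow_in: "x \<in> X \<Longrightarrow> (f^^n) x \<in> X"
  by (induction n) (use fX in auto)

lemma refine:
  "0 < \<delta> \<Longrightarrow> \<delta> \<le> d0 \<Longrightarrow> 2^k \<le> t \<Longrightarrow> (\<forall>i. \<xi> i \<in> X) \<Longrightarrow>
   (\<forall>i. Suc i \<noteq> t \<longrightarrow> f (\<xi> i) = \<xi> (Suc i)) \<Longrightarrow> dist (f (\<xi> (t-1))) (\<xi> t) \<le> \<delta> \<Longrightarrow>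
   \<exists>\<eta>. (\<forall>i. \<eta> i \<in> X) \<and> (\<forall>i. dist (f (\<eta> i)) (\<eta> (Suc i)) \<le> L^k * \<delta>) \<and>
        (\<forall>i. i \<le> t - 2^k \<or> t \<le> i \<longrightarrow> \<eta> i = \<xi> i)"
proof (induction k arbitrary: \<delta> t \<xi>)
  case 0
  show ?case
  proof (intro exI[of _ \<xi>] conjI allI impI)
    fix i show "\<xi> i \<in> X" using 0 by auto
  next
    fix i show "dist (f (\<xi> i)) (\<xi> (Suc i)) \<le> L^0 * \<delta>"
    proof (cases "Suc i = t")
      case True then have "i = t - 1" by auto
      then show ?thesis using 0 True by auto
    next
      case False then show ?thesis using 0 by auto
    qed
  qed auto
next
  case (Suc k)
  have po: "pseudo_orbit X f \<delta> \<xi>"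
    unfolding pseudo_orbit_def
  proof (intro conjI allI)
    fix i show "\<xi> i \<in> X" using Suc by auto
  next
    fix i show "dist (f (\<xi> i)) (\<xi> (Suc i)) \<le> \<delta>"
    proof (cases "Suc i = t")
      case True then have "i = t - 1" by auto
      then show ?thesis using Suc.prems True by auto
    next
      case False then show ?thesis using Suc.prems by auto
    qed
  qed
  obtain z where zX: "z \<in> X" and zs: "\<And>i. dist ((f^^i) z) (\<xi> i) \<le> L*\<delta>"
    using shad[OF Suc.prems(1,2) po] unfolding shadows_def by auto
  define s where "s = t - 2^k"
  have pk: "(1::nat) \<le> 2^k" by simp
  have st: "2^k \<le> s" "s < t" "t - 2^Suc k = s - 2^k"
  proof -
    obtain p :: nat where p: "p = 2^k" by simp
    have "2*p \<le> t" "1 \<le> p" using Suc.prems(3) pk p by auto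
    moreover have "(2::nat)^Suc k = 2*p" using p by simp
    ultimately show "2^k \<le> s" "s < t" "t - 2^Suc k = s - 2^k" unfolding s_def p[symmetric] by auto
  qed
  define \<psi>1 where "\<psi>1 = (\<lambda>i. if i < s then \<xi> i else (f^^i) z)"
  define \<psi>2 where "\<psi>2 = (\<lambda>i. if i < t then (f^^i) z else \<xi> i)"
  have Ld: "0 < L*\<delta>" "L*\<delta> \<le> d0"
    using L0 L1 Suc.prems(1,2) by (auto intro: mult_pos_pos order_trans[OF mult_left_le_one_le])
  have "\<exists>\<eta>. (\<forall>i. \<eta> i \<in> X) \<and> (\<forall>i. dist (f (\<eta> i)) (\<eta> (Suc i)) \<le> L^k * (L*\<delta>)) \<and>
        (\<forall>i. i \<le> s - 2^k \<or> s \<le> i \<longrightarrow> \<eta> i = \<psi>1 i)"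
  proof (rule Suc.IH[OF Ld st(1)])
    show "\<forall>i. \<psi>1 i \<in> X" using Suc.prems(4) zX by (auto simp: \<psi>1_def funpow_in)
    show "\<forall>i. Suc i \<noteq> s \<longrightarrow> f (\<psi>1 i) = \<psi>1 (Suc i)"
    proof (intro allI impI)
      fix i assume "Suc i \<noteq> s"
      then show "f (\<psi>1 i) = \<psi>1 (Suc i)"
        using Suc.prems(5) st by (cases "i < s") (auto simp: \<psi>1_def)
    qed
    have "s - 1 < s" "Suc (s - 1) = s" using st pk by auto
    then have "f (\<psi>1 (s-1)) = \<xi> s" using Suc.prems(5) st by (metis \<psi>1_def less_not_refl)
    moreover have "\<psi>1 s = (f^^s) z" by (simp add: \<psi>1_def)
    ultimately show "dist (f (\<psi>1 (s-1))) (\<psi>1 s) \<le> L*\<delta>" using zs[of s] by (simp add: dist_commute)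
  qed
  then obtain \<eta>1 where e1: "\<forall>i. \<eta>1 i \<in> X" "\<forall>i. dist (f (\<eta>1 i)) (\<eta>1 (Suc i)) \<le> L^k * (L*\<delta>)"
      "\<forall>i. i \<le> s - 2^k \<or> s \<le> i \<longrightarrow> \<eta>1 i = \<psi>1 i" by blast
  have "\<exists>\<eta>. (\<forall>i. \<eta> i \<in> X) \<and> (\<forall>i. dist (f (\<eta> i)) (\<eta> (Suc i)) \<le> L^k * (L*\<delta>)) \<and>
        (\<forall>i. i \<le> t - 2^k \<or> t \<le> i \<longrightarrow> \<eta> i = \<psi>2 i)"
  proof (rule Suc.IH[OF Ld])
    show "2^k \<le> t" using st by auto
    show "\<forall>i. \<psi>2 i \<in> X" using Suc.prems(4) zX by (auto simp: \<psi>2_def funpow_in)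
    show "\<forall>i. Suc i \<noteq> t \<longrightarrow> f (\<psi>2 i) = \<psi>2 (Suc i)"
    proof (intro allI impI)
      fix i assume "Suc i \<noteq> t"
      then show "f (\<psi>2 i) = \<psi>2 (Suc i)"
        using Suc.prems(5) st by (cases "i < t") (auto simp: \<psi>2_def)
    qed
    have "t - 1 < t" "Suc (t - 1) = t" using st by auto
    then have "f (\<psi>2 (t-1)) = (f^^t) z" by (metis \<psi>2_def funpow.simps(2) o_apply)
    moreover have "\<psi>2 t = \<xi> t" by (simp add: \<psi>2_def)
    ultimately show "dist (f (\<psi>2 (t-1))) (\<psi>2 t) \<le> L*\<delta>" using zs[of t] by simp
  qed
  then obtain \<eta>2 where e2: "\<forall>i. \<eta>2 i \<in> X" "\<forall>i. dist (f (\<eta>2 i)) (\<eta>2 (Suc i)) \<le> L^k * (L*\<delta>)"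
      "\<forall>i. i \<le> t - 2^k \<or> t \<le> i \<longrightarrow> \<eta>2 i = \<psi>2 i" by blast
  define \<eta> where "\<eta> = (\<lambda>i. if i < s then \<eta>1 i else \<eta>2 i)"
  show ?case
  proof (intro exI[of _ \<eta>] conjI allI impI)
    fix i show "\<eta> i \<in> X" using e1 e2 by (auto simp: \<eta>_def)
  next
    fix i
    have eq: "L^k * (L*\<delta>) = L^Suc k * \<delta>" by simp
    show "dist (f (\<eta> i)) (\<eta> (Suc i)) \<le> L^Suc k * \<delta>"
    proof (cases "Suc i < s")
      case True then show ?thesis using e1(2) eq by (auto simp: \<eta>_def)
    next
      case False
      show ?thesis
      proof (cases "Suc i = s")
        case True
        have "\<eta>2 s = (f^^s) z" using e2(3) st by (auto simp: \<psi>2_def s_def)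
        moreover have "\<eta>1 s = (f^^s) z" using e1(3) by (auto simp: \<psi>1_def)
        ultimately show ?thesis using True e1(2)[rule_format, of i] eq by (auto simp: \<eta>_def)
      next
        case False
        then show ?thesis using \<open>\<not> Suc i < s\<close> e2(2) eq by (auto simp: \<eta>_def)
      qed
    qed
  next
    fix i assume "i \<le> t - 2 ^ Suc k \<or> t \<le> i"
    then show "\<eta> i = \<xi> i"
    proof
      assume "i \<le> t - 2 ^ Suc k"
      then have "i \<le> s - 2^k" "i < s" using st pk by auto
      then show ?thesis using e1(3) by (auto simp: \<eta>_def \<psi>1_def)
    next
      assume "t \<le> i"
      then show ?thesis using e2(3) st by (auto simp: \<eta>_def \<psi>2_def)
    qed
  qed
qed

lemma IOS:
  "0 < \<delta> \<Longrightarrow> \<delta> \<le> d0 \<Longrightarrow> 2^k \<le> t \<Longrightarrow> (\<forall>i. \<xi> i \<in> X) \<Longrightarrow>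
   (\<forall>i. Suc i \<noteq> t \<longrightarrow> f (\<xi> i) = \<xi> (Suc i)) \<Longrightarrow> dist (f (\<xi> (t-1))) (\<xi> t) \<le> \<delta> \<Longrightarrow>
   \<exists>z\<in>X. \<forall>i. i \<le> t - 2^k \<or> t \<le> i \<longrightarrow> dist ((f^^i) z) (\<xi> i) \<le> L^Suc k * \<delta>"
proof -
  assume a: "0 < \<delta>" "\<delta> \<le> d0" "2^k \<le> t" "\<forall>i. \<xi> i \<in> X"
    "\<forall>i. Suc i \<noteq> t \<longrightarrow> f (\<xi> i) = \<xi> (Suc i)" "dist (f (\<xi> (t-1))) (\<xi> t) \<le> \<delta>"
  obtain \<eta> where e: "\<forall>i. \<eta> i \<in> X" "\<forall>i. dist (f (\<eta> i)) (\<eta> (Suc i)) \<le> L^k * \<delta>"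
      "\<forall>i. i \<le> t - 2^k \<or> t \<le> i \<longrightarrow> \<eta> i = \<xi> i"
    using refine[OF a] by blast
  have Lk: "0 < L^k" "L^k \<le> 1" using L0 L1 by (auto intro: power_le_one)
  have p: "0 < L^k * \<delta>" "L^k * \<delta> \<le> d0"
    using Lk a(1,2) by (auto intro: order_trans[OF mult_left_le_one_le])
  have "pseudo_orbit X f (L^k*\<delta>) \<eta>" using e by (simp add: pseudo_orbit_def)
  then obtain z where "z \<in> X" "shadows f (L*(L^k*\<delta>)) z \<eta>" using shad[OF p] by blast
  then show ?thesis using e(3) unfolding shadows_def
  proof (intro bexI[of _ z] allI impI)
    fix i assume "\<forall>i. dist ((f ^^ i) z) (\<eta> i) \<le> L * (L ^ k * \<delta>)" "i \<le> t - 2 ^ k \<or> t \<le> i"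
    then show "dist ((f ^^ i) z) (\<xi> i) \<le> L ^ Suc k * \<delta>" using e(3) by (metis mult.assoc power_Suc)
  qed
qed


lemma cont_funpow: "continuous_on X f \<Longrightarrow> continuous_on X (f^^n)"
proof (induction n)
  case 0 then show ?case by (simp add: continuous_on_id)
next
  case (Suc n)
  have "(f^^n) ` X \<subseteq> X" using funpow_in by auto
  then have "continuous_on ((f^^n) ` X) f" using Suc.prems continuous_on_subset by blast
  then show ?case using continuous_on_compose[OF Suc.IH[OF Suc.prems]] by simp
qed

lemma funpow_period: "(f^^m) p = p \<Longrightarrow> (f^^(m*a)) p = p"
proof (induction a)
  case 0 then show ?case by simp
next
  case (Suc a)
  have "(f^^(m*Suc a)) p = (f^^m) ((f^^(m*a)) p)" by (simp add: funpow_add)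
  then show ?case using Suc by simp
qed

lemma funpow_mod: "(f^^m) p = p \<Longrightarrow> (f^^j) p = (f^^(j mod m)) p"
proof -
  assume a: "(f^^m) p = p"
  have "j = j mod m + m*(j div m)" by simp
  then have "(f^^j) p = (f^^(j mod m)) ((f^^(m*(j div m))) p)" by (metis funpow_add o_apply)
  then show ?thesis using funpow_period[OF a] by simp
qed

lemma recur:
  assumes "X = recurrent_set X f" "x \<in> X" "0 < e"
  shows "\<exists>N\<ge>M. dist ((f^^N) x) x < e"
proof -
  have "x \<in> omega_limit f x" using assms(1,2) unfolding recurrent_set_def by blast
  then obtain r where r: "strict_mono r" "(\<lambda>j. (f ^^ r j) x) \<longlonglongrightarrow> x"
    unfolding omega_limit_def by blast
  then obtain N where "\<forall>n\<ge>N. dist ((f ^^ r n) x) x < e" using assms(3) unfolding lim_sequentially by blast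
  then have "dist ((f ^^ r (max N M)) x) x < e" by simp
  moreover have "M \<le> r (max N M)" using seq_suble[OF r(1), of "max N M"] by simp
  ultimately show ?thesis by blast
qed

lemma periodic_near:
  assumes cX: "compact X" and cf: "continuous_on X f" and lam: "L^Suc k < 1/3"
    and t: "2^k \<le> t" and x: "x \<in> X" and dx: "dist ((f^^t) x) x \<le> d0"
  shows "\<exists>p\<in>X. (f^^t) p = p \<and> dist p x \<le> dist ((f^^t) x) x"
proof -
  define \<psi> where "\<psi> = (\<lambda>w. dist ((f^^t) w) w + dist w x)"
  have "continuous_on X \<psi>" unfolding \<psi>_def
    by (intro continuous_intros cont_funpow[OF cf])
  then obtain p where pX: "p \<in> X" and pmin: "\<forall>y\<in>X. \<psi> p \<le> \<psi> y"
    using continuous_attains_inf[OF cX] x by blast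
  have px: "\<psi> p \<le> dist ((f^^t) x) x" using pmin x by (auto simp: \<psi>_def)
  have "(1::nat) \<le> 2^k" by simp
  then have t1: "1 \<le> t" using t by linarith
  have fix0: "(f^^t) p = p"
  proof (rule ccontr)
    assume "(f^^t) p \<noteq> p"
    define e where "e = dist ((f^^t) p) p"
    have e0: "0 < e" using \<open>(f^^t) p \<noteq> p\<close> by (simp add: e_def)
    have ed: "e \<le> d0" using px dx zero_le_dist[of p x] unfolding e_def \<psi>_def by linarith
    define \<xi> where "\<xi> = (\<lambda>i. if i < t then (f^^i) p else (f^^(i-t)) p)"
    have "\<exists>z\<in>X. \<forall>i. i \<le> t - 2^k \<or> t \<le> i \<longrightarrow> dist ((f^^i) z) (\<xi> i) \<le> L^Suc k * e"
    proof (rule IOS[OF e0 ed t])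
      show "\<forall>i. \<xi> i \<in> X" using pX by (auto simp: \<xi>_def funpow_in)
      show "\<forall>i. Suc i \<noteq> t \<longrightarrow> f (\<xi> i) = \<xi> (Suc i)"
      proof (intro allI impI)
        fix i assume "Suc i \<noteq> t"
        then show "f (\<xi> i) = \<xi> (Suc i)"
          by (cases "i < t") (auto simp: \<xi>_def Suc_diff_le)
      qed
      have s1: "Suc (t-1) = t" "t - 1 < t" using t1 by auto
      have "(f^^t) p = f ((f^^(t-1)) p)" using s1(1) by (metis funpow.simps(2) o_apply)
      then have "f (\<xi> (t-1)) = (f^^t) p" using s1(2) by (simp add: \<xi>_def)
      moreover have "\<xi> t = p" by (simp add: \<xi>_def)
      ultimately show "dist (f (\<xi> (t-1))) (\<xi> t) \<le> e" by (simp add: e_def)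
    qed
    then obtain z where zX: "z \<in> X" and zb: "\<forall>i. i \<le> t - 2^k \<or> t \<le> i \<longrightarrow> dist ((f^^i) z) (\<xi> i) \<le> L^Suc k * e"
      by blast
    have z0: "dist z p \<le> L^Suc k * e" using zb[rule_format, of 0] t1 by (simp add: \<xi>_def)
    have zt: "dist ((f^^t) z) p \<le> L^Suc k * e" using zb[rule_format, of t] by (simp add: \<xi>_def)
    have "\<psi> z \<le> dist ((f^^t) z) p + dist p z + (dist z p + dist p x)"
      unfolding \<psi>_def by (intro add_mono dist_triangle)
    also have "\<dots> \<le> 3 * (L^Suc k * e) + dist p x" using z0 zt by (simp add: dist_commute)
    also have "\<dots> < e + dist p x"
    proof -
      have "L^Suc k * e < (1/3) * e" using lam e0 by (rule mult_strict_right_mono)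
      then show ?thesis by linarith
    qed
    also have "\<dots> = \<psi> p" by (simp add: \<psi>_def e_def)
    finally show False using pmin zX by force
  qed
  have "dist p x \<le> \<psi> p" using fix0 by (simp add: \<psi>_def)
  then show ?thesis using pX fix0 px by auto
qed


lemma separation:
  assumes rec: "X = recurrent_set X f" and pX: "p \<in> X" and qX: "q \<in> X"
    and m: "0 < m" "(f^^m) p = p" and m': "0 < m'" "(f^^m') q = q" and dqp: "dist q p \<le> d0"
  shows "q \<in> (\<lambda>j. (f^^j) p) ` {..<m}"
proof -
  let ?O = "(\<lambda>j. (f^^j) p) ` {..<m}"
  have cl: "closed ?O" by (intro finite_imp_closed) simp
  have orb: "\<And>j. (f^^j) p \<in> ?O"
  proof -
    fix j have "(f^^j) p = (f^^(j mod m)) p" using funpow_mod[OF m(2)] .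
    moreover have "j mod m < m" using m(1) by simp
    ultimately show "(f^^j) p \<in> ?O" by blast
  qed
  have "q \<in> closure ?O"
    unfolding closure_approachable
  proof (intro allI impI)
    fix \<epsilon> :: real assume \<epsilon>: "0 < \<epsilon>"
    show "\<exists>y\<in>?O. dist y q < \<epsilon>"
    proof (cases "q = p")
      case True
      have "p \<in> ?O" using orb[of 0] by simp
      then show ?thesis using True \<epsilon> by (intro bexI[of _ p]) auto
    next
      case False
      define J where "J = dist q p"
      have J0: "0 < J" using False by (simp add: J_def)
      obtain n where n: "L^n < \<epsilon> / (4*J)" using real_arch_pow_inv[of "\<epsilon>/(4*J)" L] \<epsilon> J0 L1 by auto
      define t where "t = m' * 2^n"
      have t: "2^n \<le> t" using m'(1) by (simp add: t_def)
      have qt: "(f^^t) q = q" using funpow_period[OF m'(2)] by (simp add: t_def)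
      have "(1::nat) \<le> 2^n" by simp
      then have t1: "1 \<le> t" using t by linarith
      define \<xi> where "\<xi> = (\<lambda>i. if i < t then (f^^i) q else (f^^(i-t)) p)"
      have "\<exists>z\<in>X. \<forall>i. i \<le> t - 2^n \<or> t \<le> i \<longrightarrow> dist ((f^^i) z) (\<xi> i) \<le> L^Suc n * J"
      proof (rule IOS[OF J0 _ t])
        show "J \<le> d0" using dqp by (simp add: J_def)
        show "\<forall>i. \<xi> i \<in> X" using pX qX by (auto simp: \<xi>_def funpow_in)
        show "\<forall>i. Suc i \<noteq> t \<longrightarrow> f (\<xi> i) = \<xi> (Suc i)"
        proof (intro allI impI)
          fix i assume "Suc i \<noteq> t"
          then show "f (\<xi> i) = \<xi> (Suc i)"
            by (cases "i < t") (auto simp: \<xi>_def Suc_diff_le)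
        qed
        have s1: "Suc (t-1) = t" "t - 1 < t" using t1 by auto
        have "(f^^t) q = f ((f^^(t-1)) q)" using s1(1) by (metis funpow.simps(2) o_apply)
        then have "f (\<xi> (t-1)) = q" using s1(2) qt by (simp add: \<xi>_def)
        moreover have "\<xi> t = p" by (simp add: \<xi>_def)
        ultimately show "dist (f (\<xi> (t-1))) (\<xi> t) \<le> J" by (simp add: J_def)
      qed
      then obtain z where zX: "z \<in> X" and zb: "\<forall>i. i \<le> t - 2^n \<or> t \<le> i \<longrightarrow> dist ((f^^i) z) (\<xi> i) \<le> L^Suc n * J"
        by blast
      have z0: "dist z q \<le> L^Suc n * J" using zb[rule_format, of 0] t1 by (simp add: \<xi>_def)
      obtain N where N: "N \<ge> t" "dist ((f^^N) z) z < \<epsilon>/2" using recur[OF rec zX, of "\<epsilon>/2" t] \<epsilon> by auto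
      have zN: "dist ((f^^N) z) ((f^^(N-t)) p) \<le> L^Suc n * J" using zb[rule_format, of N] N(1) by (simp add: \<xi>_def)
      have LS: "L^Suc n \<le> L^n" using L0 L1 by (simp add: power_Suc mult_left_le_one_le)
      have "L^n * J < \<epsilon>/4" using n J0 by (simp add: field_simps)
      then have "L^Suc n * J < \<epsilon>/4" using LS J0 by (meson le_less_trans mult_right_mono less_imp_le)
      then have "dist ((f^^(N-t)) p) q < \<epsilon>"
        using dist_triangle[of "(f^^(N-t)) p" q z] dist_triangle[of "(f^^(N-t)) p" z "(f^^N) z"]
          z0 zN N(2) by (simp add: dist_commute)
      then show ?thesis using orb by blast
    qed
  qed
  then show ?thesis using cl closure_closed by blast
qed

lemma density:
  assumes rec: "X = recurrent_set X f" and cX: "compact X" and cf: "continuous_on X f"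
    and lam: "L^Suc k < 1/3" and y: "y \<in> X" and e: "0 < e"
  shows "\<exists>q\<in>X. \<exists>m>0. (f^^m) q = q \<and> dist q y < e"
proof -
  obtain N where N: "N \<ge> 2^k" "dist ((f^^N) y) y < min e d0"
    using recur[OF rec y, of "min e d0" "2^k"] e d0 by auto
  obtain q where "q \<in> X" "(f^^N) q = q" "dist q y \<le> dist ((f^^N) y) y"
    using periodic_near[OF cX cf lam N(1) y] N(2) by auto
  moreover have "(1::nat) \<le> 2^k" by simp
  then have "0 < N" using N(1) by linarith
  ultimately show ?thesis using N by (intro bexI[of _ q] exI[of _ N]) auto
qed

lemma local_finite:
  assumes rec: "X = recurrent_set X f" and cX: "compact X" and cf: "continuous_on X f"
    and lam: "L^Suc k < 1/3" and x: "x \<in> X"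
  shows "\<exists>S. finite S \<and> X \<inter> ball x (d0/2) \<subseteq> S"
proof -
  obtain p m where pX: "p \<in> X" and m: "0 < m" "(f^^m) p = p" and px: "dist p x < d0/2"
    using density[OF rec cX cf lam x, of "d0/2"] d0 by auto
  let ?O = "(\<lambda>j. (f^^j) p) ` {..<m}"
  have "X \<inter> ball x (d0/2) \<subseteq> ?O"
  proof
    fix y assume y: "y \<in> X \<inter> ball x (d0/2)"
    have "y \<in> closure ?O"
      unfolding closure_approachable
    proof (intro allI impI)
      fix \<epsilon> :: real assume \<epsilon>: "0 < \<epsilon>"
      define \<eta> where "\<eta> = min \<epsilon> (d0/2 - dist x y)"
      have \<eta>: "0 < \<eta>" using \<epsilon> y by (auto simp: \<eta>_def)
      obtain q m' where qX: "q \<in> X" and m': "0 < m'" "(f^^m') q = q" and qy: "dist q y < \<eta>"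
        using density[OF rec cX cf lam _ \<eta>] y by blast
      have "dist q p \<le> d0"
        using dist_triangle[of q p y] dist_triangle[of y p x] px qy
        by (simp add: \<eta>_def dist_commute)
      then have "q \<in> ?O" using separation[OF rec pX qX m m'] by blast
      moreover have "dist q y < \<epsilon>" using qy by (simp add: \<eta>_def)
      ultimately show "\<exists>z\<in>?O. dist z y < \<epsilon>" by blast
    qed
    moreover have "closed ?O" by (intro finite_imp_closed) simp
    ultimately show "y \<in> ?O" using closure_closed by blast
  qed
  then show ?thesis by (intro exI[of _ ?O]) simp
qed

end

theorem lemma2p1:
  fixes X :: "'a::metric_space set" and f :: "'a \<Rightarrow> 'a"
  assumes "compact X"
    and "continuous_on X f" and "f ` X \<subseteq> X"
    and "X = recurrent_set X f"
    and "contractive_shadowing X f"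
  shows "finite X"
proof -
  obtain L d0 where L: "0 < L" "L < 1" "0 < d0"
    and sh: "\<forall>\<delta>. 0 < \<delta> \<and> \<delta> \<le> d0 \<longrightarrow> (\<forall>xs. pseudo_orbit X f \<delta> xs \<longrightarrow> (\<exists>x\<in>X. shadows f (L * \<delta>) x xs))"
    using assms(5) unfolding contractive_shadowing_def by blast
  have shad: "\<And>\<delta> xs. 0 < \<delta> \<Longrightarrow> \<delta> \<le> d0 \<Longrightarrow> pseudo_orbit X f \<delta> xs \<Longrightarrow> \<exists>x\<in>X. shadows f (L*\<delta>) x xs"
    using sh by blast
  obtain k where k: "L^k < 1/3" using real_arch_pow_inv[of "1/3" L] L by auto
  have "L^Suc k \<le> L^k" using L by (simp add: mult_left_le_one_le)
  then have lam: "L^Suc k < 1/3" using k by linarith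
  have lf: "\<And>x. x \<in> X \<Longrightarrow> \<exists>S. finite S \<and> X \<inter> ball x (d0/2) \<subseteq> S"
    using local_finite[OF assms(3) L shad assms(4,1,2) lam] by blast
  obtain S where S: "\<And>x. x \<in> X \<Longrightarrow> finite (S x) \<and> X \<inter> ball x (d0/2) \<subseteq> S x"
    using lf by metis
  have "X \<subseteq> (\<Union>x\<in>X. ball x (d0/2))" using L(3) by auto
  then obtain C where C: "C \<subseteq> X" "finite C" "X \<subseteq> (\<Union>x\<in>C. ball x (d0/2))"
    using compactE_image[OF assms(1), of X "\<lambda>x. ball x (d0/2)"] by blast
  have "X \<subseteq> (\<Union>x\<in>C. S x)" using C S by blast
  moreover have "finite (\<Union>x\<in>C. S x)" using C S by blast
  ultimately show ?thesis using finite_subset by blast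
qed

end
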